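(* For all $n\geq 2$ and $0\leq k\leq n-1$, $$Q_{n,k}(x,t)-Q_{n,k}(x-t-1,t)=(t+1)(n+k-1)\,Q_{n-1,k}(x,t).$$
   Context: Define polynomials $Q_m(x,y,z,t)$ by $Q_1=1$ and $Q_{m+1}=[x+mz+(y+t)(m+y\partial_y)]Q_m$ for $m\ge1$ ($\partial_y$ the partial derivative in $y$), and define $Q_{m,k}(x,t)$ by $Q_m(x,y,1,t)=\sum_{k=0}^{m-1}Q_{m,k}(x,t)y^k$, with the convention $Q_{m,k}=0$ if $k<0$ or $k\geq m$. *)

theory Defs
  imports "HOL-Computational_Algebra.Polynomial"
begin

text \<open>Q_m(x,y,z,t) viewed as a polynomial in y whose coefficients are evaluated at
  ring elements x, z, t.  Q_1 = 1 and
  Q_{m+1} = [x + m z + (y+t)(m + y d/dy)] Q_m.  (Index 0 is unused; set to 0.)\<close>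
fun Qpoly :: "nat \<Rightarrow> 'a::idom \<Rightarrow> 'a \<Rightarrow> 'a \<Rightarrow> 'a poly" where
  "Qpoly 0 x z t = 0"
| "Qpoly (Suc 0) x z t = 1"
| "Qpoly (Suc (Suc m)) x z t =
     (let Q = Qpoly (Suc m) x z t; mm = of_nat (Suc m) in
       smult (x + mm * z) Q + [:t, 1:] * (smult mm Q + [:0, 1:] * pderiv Q))"

definition Qc :: "nat \<Rightarrow> nat \<Rightarrow> 'a::idom \<Rightarrow> 'a \<Rightarrow> 'a" where
  "Qc m k x t = coeff (Qpoly m x 1 t) k"

end

theory Submission
  imports Defs
begin

lemma rec0:
  assumes "m \<ge> 1"
  shows "Qc (Suc m) 0 x t = (x + of_nat m + t * of_nat m) * Qc m 0 x t"
proof -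
  obtain j where m: "m = Suc j" using assms by (cases m) auto
  show ?thesis unfolding m Qc_def
    by (simp add: Let_def algebra_simps)
qed

lemma rec1:
  assumes "m \<ge> 1"
  shows "Qc (Suc m) (Suc k) x t = (x + of_nat m + t * of_nat (m + Suc k)) * Qc m (Suc k) x t
      + of_nat (m + k) * Qc m k x t"
proof -
  obtain j where m: "m = Suc j" using assms by (cases m) auto
  show ?thesis unfolding m Qc_def
    by (cases k) (simp_all add: Let_def coeff_pderiv algebra_simps)
qed

lemma main:
  fixes x t :: "'a::idom"
  shows "\<forall>k x. Qc (Suc (Suc n)) k x t - Qc (Suc (Suc n)) k (x - t - 1) t
     = (t + 1) * of_nat (Suc n + k) * Qc (Suc n) k x t"
proof (induction n)
  case 0
  show ?case
  proof (intro allI)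
    fix k and x :: 'a
    show "Qc (Suc (Suc 0)) k x t - Qc (Suc (Suc 0)) k (x - t - 1) t
     = (t + 1) * of_nat (Suc 0 + k) * Qc (Suc 0) k x t"
      by (cases k) (auto simp: Qc_def algebra_simps coeff_pCons split: nat.splits)
  qed
next
  case (Suc n)
  show ?case
  proof (intro allI)
    fix k and x :: 'a
    let ?s = "t + 1"
    let ?m = "Suc (Suc n)"
    show "Qc (Suc ?m) k x t - Qc (Suc ?m) k (x - t - 1) t
     = (t + 1) * of_nat (Suc (Suc n) + k) * Qc ?m k x t"
    proof (cases k)
      case 0
      have IH: "Qc ?m 0 (x - t - 1) t = Qc ?m 0 x t - ?s * of_nat (Suc n) * Qc (Suc n) 0 x t"
        using Suc.IH by (metis add_0_right diff_eq_eq add.commute)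
      show ?thesis unfolding 0
        apply (simp only: rec0[of ?m] rec0[of "Suc n"] IH)
        apply (simp add: rec0 algebra_simps)
        done
    next
      case (Suc j)
      have IH1: "Qc ?m (Suc j) (x - t - 1) t = Qc ?m (Suc j) x t - ?s * of_nat (Suc n + Suc j) * Qc (Suc n) (Suc j) x t"
        using Suc.IH by (metis diff_eq_eq add.commute)
      have IH2: "Qc ?m j (x - t - 1) t = Qc ?m j x t - ?s * of_nat (Suc n + j) * Qc (Suc n) j x t"
        using Suc.IH by (metis diff_eq_eq add.commute)
      have R1: "Qc ?m (Suc j) x t = (x + of_nat (Suc n) + t * of_nat (Suc n + Suc j)) * Qc (Suc n) (Suc j) x t
      + of_nat (Suc n + j) * Qc (Suc n) j x t" by (rule rec1) simp
      show ?thesis unfolding Suc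
        apply (simp only: rec1[of ?m] IH1 IH2)
        apply (simp only: R1)
        apply (simp add: algebra_simps)
        done
    qed
  qed
qed

theorem lemma6p2:
  fixes x t :: "'a::idom" and n k :: nat
  assumes "n \<ge> 2" and "k \<le> n - 1"
  shows "Qc n k x t - Qc n k (x - t - 1) t = (t + 1) * of_nat (n + k - 1) * Qc (n - 1) k x t"
proof -
  obtain j where n: "n = Suc (Suc j)" using assms(1) by (metis add_2_eq_Suc le_Suc_ex)
  show ?thesis using main[of j t] unfolding n by simp
qed

end
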